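(* Consider the click-through auction setting below with $n=2$ bidders and arbitrary known values $v_1,v_2\ge 0$. For every information structure that is both calibrated and independent, its expected revenue is at most $\min\big(v_1\mathbb{E}[r_1],\,v_2\mathbb{E}[r_2]\big)$, which is the expected revenue of the no-disclosure information structure. In particular, no independent calibrated information structure (including full disclosure) yields strictly more revenue than no disclosure.
   Context: Setting. There are $n\ge 2$ bidders; bidder $i$ has a known value per click $v_i\ge 0$. A vector of click-through rates (CTRs) $r=(r_1,\dots,r_n)\in[0,1]^n$ is drawn from a prior distribution $G$ with finite support (probability mass function $g$). An information structure is a probability distribution $x$ with finite support on pairs $(r,s)\in[0,1]^n\times[0,1]^n$ whose $r$-marginal is $G$, i.e. $\sum_s x(r,s)=g(r)$ for all $r$; $s=(s_1,\dots,s_n)$ is the vector of signals (scores). Given $s$, the winner $i^*$ is a bidder maximizing $v_is_i$, ties broken uniformly at random; the winner's price per click is $p_{i^*}=\max_{j\neq i^*}v_js_j/s_{i^*}$ (revenue is taken to be $0$ if $s_{i^*}=0$), and the winner pays only upon a click, which occurs with probability $r_{i^*}$. The revenue of an information structure is $\mathrm{Rev}=\mathbb{E}[r_{i^*}p_{i^*}]$, the expectation taken over $(r,s)\sim x$ and tie-breaking. An information structure is calibrated if $\mathbb{E}[r_i\mid s_i=t]=t$ for every bidder $i$ and every $t$ with $\Pr[s_i=t]>0$. It is independent if $\mathbb{E}[r_i\mid s]=\mathbb{E}[r_i\mid s_i]$ for every $i$ and every $s$ in the support; otherwise it is correlated. Full disclosure is the structure with $s=r$ almost surely; no disclosure is the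 structure with $s_i=\mathbb{E}[r_i]$ almost surely for every $i$. *)

theory Defs
  imports "HOL-Probability.Probability"
begin

text \<open>Bidders are the elements of a finite index type 'n; vectors of CTRs / scores
  are functions 'n \<Rightarrow> real. An information structure is a finitely supported
  pmf on pairs (r, s).\<close>

type_synonym 'n vec = "'n \<Rightarrow> real"

definition in_unit_cube :: "'n vec \<Rightarrow> bool" where
  "in_unit_cube r \<longleftrightarrow> (\<forall>i. 0 \<le> r i \<and> r i \<le> 1)"

definition is_prior :: "'n vec pmf \<Rightarrow> bool" where
  "is_prior G \<longleftrightarrow> finite (set_pmf G) \<and> (\<forall>r\<in>set_pmf G. in_unit_cube r)"

definition info_structure :: "'n vec pmf \<Rightarrow> ('n vec \<times> 'n vec) pmf \<Rightarrow> bool" where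
  "info_structure G x \<longleftrightarrow> finite (set_pmf x) \<and>
     (\<forall>(r, s)\<in>set_pmf x. in_unit_cube r \<and> in_unit_cube s) \<and>
     map_pmf fst x = G"

definition cond_exp :: "'a pmf \<Rightarrow> ('a \<Rightarrow> real) \<Rightarrow> 'a set \<Rightarrow> real" where
  "cond_exp x f A = measure_pmf.expectation x (\<lambda>w. f w * indicator A w) / measure_pmf.prob x A"

definition calibrated :: "('n vec \<times> 'n vec) pmf \<Rightarrow> bool" where
  "calibrated x \<longleftrightarrow> (\<forall>i t. measure_pmf.prob x {(r, s). s i = t} > 0 \<longrightarrow>
       cond_exp x (\<lambda>(r, s). r i) {(r, s). s i = t} = t)"

definition independent_is :: "('n vec \<times> 'n vec) pmf \<Rightarrow> bool" where
  "independent_is x \<longleftrightarrow> (\<forall>i. \<forall>s0 \<in> snd ` set_pmf x.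
       cond_exp x (\<lambda>(r, s). r i) {(r, s). s = s0} =
       cond_exp x (\<lambda>(r, s). r i) {(r, s). s i = s0 i})"

text \<open>Auction outcome: winners are the maximizers of v_i s_i (ties uniformly at random),
  price per click = highest competing bid divided by own score (revenue 0 if score is 0).\<close>
definition winners :: "'n vec \<Rightarrow> 'n vec \<Rightarrow> 'n set" where
  "winners v s = {i. \<forall>j. v j * s j \<le> v i * s i}"

definition price :: "'n::finite vec \<Rightarrow> 'n vec \<Rightarrow> 'n \<Rightarrow> real" where
  "price v s i = (if s i = 0 then 0 else Max ((\<lambda>j. v j * s j) ` (UNIV - {i})) / s i)"

definition outcome_revenue :: "'n::finite vec \<Rightarrow> 'n vec \<Rightarrow> 'n vec \<Rightarrow> real" where
  "outcome_revenue v r s =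
     (\<Sum>i\<in>winners v s. r i * price v s i) / real (card (winners v s))"

definition revenue :: "'n::finite vec \<Rightarrow> ('n vec \<times> 'n vec) pmf \<Rightarrow> real" where
  "revenue v x = measure_pmf.expectation x (\<lambda>(r, s). outcome_revenue v r s)"

definition full_disclosure :: "'n vec pmf \<Rightarrow> ('n vec \<times> 'n vec) pmf" where
  "full_disclosure G = map_pmf (\<lambda>r. (r, r)) G"

definition no_disclosure :: "'n vec pmf \<Rightarrow> ('n vec \<times> 'n vec) pmf" where
  "no_disclosure G = map_pmf (\<lambda>r. (r, \<lambda>i. measure_pmf.expectation G (\<lambda>r'. r' i))) G"

end

theory Submission
  imports Defs
begin

lemma E_group:
  fixes x :: "('a \<times> 'b) pmf" and F :: "'a \<Rightarrow> 'b \<Rightarrow> real"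
  assumes fin: "finite (set_pmf x)"
  shows "measure_pmf.expectation x (\<lambda>(r,s). F r s) =
    (\<Sum>s0\<in>snd ` set_pmf x. \<Sum>p\<in>{p\<in>set_pmf x. snd p = s0}. F (fst p) s0 * pmf x p)"
proof -
  have "measure_pmf.expectation x (\<lambda>(r,s). F r s) = (\<Sum>p\<in>set_pmf x. (case p of (r,s) \<Rightarrow> F r s) * pmf x p)"
    by (rule integral_measure_pmf_real[OF fin]) auto
  also have "\<dots> = (\<Sum>s0\<in>snd ` set_pmf x. \<Sum>p\<in>{p\<in>set_pmf x. snd p = s0}. (case p of (r,s) \<Rightarrow> F r s) * pmf x p)"
    by (rule sum.group[symmetric]) (use fin in auto)
  also have "\<dots> = (\<Sum>s0\<in>snd ` set_pmf x. \<Sum>p\<in>{p\<in>set_pmf x. snd p = s0}. F (fst p) s0 * pmf x p)"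
    by (intro sum.cong refl) (auto split: prod.splits)
  finally show ?thesis .
qed

lemma core:
  fixes x :: "('a \<times> 'b) pmf" and f :: "'a \<Rightarrow> real" and g h :: "'b \<Rightarrow> real"
  assumes fin: "finite (set_pmf x)"
    and H: "\<forall>s0 \<in> snd ` set_pmf x. measure_pmf.expectation x (\<lambda>w. (case w of (r,s) \<Rightarrow> f r) * indicator {(r,s). s = s0} w)
         = h s0 * measure_pmf.prob x {(r,s). s = s0}"
  shows "measure_pmf.expectation x (\<lambda>(r,s). f r * g s) = measure_pmf.expectation x (\<lambda>(r,s). h s * g s)"
proof -
  define A where "A s0 = (\<Sum>p\<in>{p\<in>set_pmf x. snd p = s0}. f (fst p) * pmf x p)" for s0
  define P where "P s0 = (\<Sum>p\<in>{p\<in>set_pmf x. snd p = s0}. pmf x p)" for s0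
  have key: "A s0 = h s0 * P s0" if s0: "s0 \<in> snd ` set_pmf x" for s0
  proof -
    have "measure_pmf.expectation x (\<lambda>w. (case w of (r,s) \<Rightarrow> f r) * indicator {(r,s). s = s0} w)
       = measure_pmf.expectation x (\<lambda>(r,s). f r * (if s = s0 then 1 else 0))"
      by (intro Bochner_Integration.integral_cong refl) (auto split: prod.splits)
    also have "\<dots> = (\<Sum>s1\<in>snd ` set_pmf x. \<Sum>p\<in>{p\<in>set_pmf x. snd p = s1}. f (fst p) * (if s1 = s0 then 1 else 0) * pmf x p)"
      by (rule E_group[OF fin])
    also have "\<dots> = (\<Sum>s1\<in>snd ` set_pmf x. if s1 = s0 then A s1 else 0)"
      unfolding A_def by (intro sum.cong refl) (auto)
    also have "\<dots> = A s0" using s0 fin by (simp add: sum.delta)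
    finally have 1: "measure_pmf.expectation x (\<lambda>w. (case w of (r,s) \<Rightarrow> f r) * indicator {(r,s). s = s0} w) = A s0" .
    have "measure_pmf.prob x {(r,s). s = s0} = measure_pmf.prob x ({(r,s). s = s0} \<inter> set_pmf x)"
      by (simp add: measure_Int_set_pmf)
    also have "\<dots> = sum (pmf x) ({(r,s). s = s0} \<inter> set_pmf x)"
      using fin by (intro measure_measure_pmf_finite) auto
    also have "\<dots> = P s0" unfolding P_def by (intro sum.cong) auto
    finally have 2: "measure_pmf.prob x {(r,s). s = s0} = P s0" .
    show ?thesis using H s0 1 2 by auto
  qed
  have "measure_pmf.expectation x (\<lambda>(r,s). f r * g s) = (\<Sum>s0\<in>snd ` set_pmf x. g s0 * A s0)"
    unfolding E_group[OF fin] A_def by (intro sum.cong refl) (auto simp: sum_distrib_left mult_ac)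
  also have "\<dots> = (\<Sum>s0\<in>snd ` set_pmf x. g s0 * (h s0 * P s0))"
    using key by (intro sum.cong refl) auto
  also have "\<dots> = measure_pmf.expectation x (\<lambda>(r,s). h s * g s)"
    unfolding E_group[OF fin] P_def by (intro sum.cong refl) (auto simp: sum_distrib_left mult_ac)
  finally show ?thesis .
qed
definition wt :: "'n::finite vec \<Rightarrow> 'n vec \<Rightarrow> 'n \<Rightarrow> real" where
  "wt v s i = (if i \<in> winners v s then price v s i / real (card (winners v s)) else 0)"

lemma outcome_lin: "outcome_revenue v r s = (\<Sum>i\<in>UNIV. r i * wt v s i)"
proof -
  have "outcome_revenue v r s = (\<Sum>i\<in>winners v s. r i * price v s i / real (card (winners v s)))"
    unfolding outcome_revenue_def by (simp add: sum_divide_distrib)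
  also have "\<dots> = (\<Sum>i\<in>UNIV \<inter> winners v s. r i * price v s i / real (card (winners v s)))" by simp
  also have "\<dots> = (\<Sum>i\<in>UNIV. if i \<in> winners v s then r i * price v s i / real (card (winners v s)) else 0)"
    by (rule sum.inter_restrict) simp
  also have "\<dots> = (\<Sum>i\<in>UNIV. r i * wt v s i)"
    by (intro sum.cong refl) (simp add: wt_def)
  finally show ?thesis .
qed

lemma pointwise:
  fixes v s :: "'n::finite vec"
  assumes two: "CARD('n) = 2" and v: "\<forall>i. 0 \<le> v i" and s: "\<forall>i. 0 \<le> s i"
  shows "(\<Sum>i\<in>UNIV. s i * wt v s i) = Min (range (\<lambda>i. v i * s i))"
proof -
  obtain a b :: 'n where U: "UNIV = {a, b}" and ab: "a \<noteq> b"
    using two by (metis card_2_iff)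
  have ev: "\<And>j. j = a \<or> j = b" using U by blast
  have allab: "\<And>P. (\<forall>j. P j) \<longleftrightarrow> P a \<and> P b" using ev by metis
  have rng: "range (\<lambda>i. v i * s i) = {v a * s a, v b * s b}" by (simp only: U image_insert image_empty)
  have Ma: "Max ((\<lambda>j. v j * s j) ` (UNIV - {a})) = v b * s b"
  proof -
    have "UNIV - {a} = {b}" using ev ab by blast
    thus ?thesis by simp
  qed
  have Mb: "Max ((\<lambda>j. v j * s j) ` (UNIV - {b})) = v a * s a"
  proof -
    have "UNIV - {b} = {a}" using ev ab by blast
    thus ?thesis by simp
  qed
  have W: "winners v s = {i. \<forall>j\<in>{a,b}. v j * s j \<le> v i * s i}"
    unfolding winners_def by (simp add: allab)
  have pa: "s a * price v s a = (if s a = 0 then 0 else v b * s b)"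
    unfolding price_def Ma by auto
  have pb: "s b * price v s b = (if s b = 0 then 0 else v a * s a)"
    unfolding price_def Mb by auto
  have nn: "0 \<le> v a * s a" "0 \<le> v b * s b" using v s by auto
  have sumab0: "(\<Sum>i\<in>UNIV. s i * wt v s i) = (\<Sum>i\<in>{a,b}. s i * wt v s i)"
    by (simp only: U)
  have sumab: "(\<Sum>i\<in>UNIV. s i * wt v s i) = s a * wt v s a + s b * wt v s b"
    unfolding sumab0 using ab by simp
  have mem: "i \<in> winners v s \<longleftrightarrow> v a * s a \<le> v i * s i \<and> v b * s b \<le> v i * s i" for i
    unfolding W by simp
  consider "v a * s a > v b * s b" | "v a * s a < v b * s b" | "v a * s a = v b * s b" by linarith
  then show ?thesis
  proof cases
    case 1
    have Wa: "winners v s = {a}"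
    proof (rule set_eqI)
      fix i
      show "i \<in> winners v s \<longleftrightarrow> i \<in> {a}"
        by (cases "i = a") (use ev[of i] 1 ab in \<open>auto simp: mem\<close>)
    qed
    have "s a \<noteq> 0" using 1 nn by auto
    then show ?thesis unfolding sumab rng using ab pa 1 by (auto simp: wt_def Wa)
  next
    case 2
    have Wb: "winners v s = {b}"
    proof (rule set_eqI)
      fix i
      show "i \<in> winners v s \<longleftrightarrow> i \<in> {b}"
        by (cases "i = b") (use ev[of i] 2 ab in \<open>auto simp: mem\<close>)
    qed
    have "s b \<noteq> 0" using 2 nn by auto
    then show ?thesis unfolding sumab rng using ab pb 2 by (auto simp: wt_def Wb)
  next
    case 3
    have Wab: "winners v s = {a, b}"
    proof (rule set_eqI)
      fix i
      show "i \<in> winners v s \<longleftrightarrow> i \<in> {a, b}"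
        by (cases "i = b") (use ev[of i] 3 ab in \<open>auto simp: mem\<close>)
    qed
    have "s a * price v s a = v b * s b" using pa 3 nn by auto
    moreover have "s b * price v s b = v a * s a" using pb 3 nn by auto
    ultimately show ?thesis unfolding sumab rng using ab 3 by (auto simp: wt_def Wab)
  qed
qed

lemma E_cong:
  fixes x :: "'a pmf" and F H :: "'a \<Rightarrow> real"
  assumes fin: "finite (set_pmf x)" and eq: "\<And>p. p \<in> set_pmf x \<Longrightarrow> F p = H p"
  shows "measure_pmf.expectation x F = measure_pmf.expectation x H"
proof -
  have "measure_pmf.expectation x F = (\<Sum>p\<in>set_pmf x. F p * pmf x p)"
    by (rule integral_measure_pmf_real[OF fin]) auto
  also have "\<dots> = (\<Sum>p\<in>set_pmf x. H p * pmf x p)" using eq by (intro sum.cong) auto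
  also have "\<dots> = measure_pmf.expectation x H"
    by (rule integral_measure_pmf_real[OF fin, symmetric]) auto
  finally show ?thesis .
qed

theorem mainTheorem1:
  fixes v :: "'n::finite \<Rightarrow> real"
    and G :: "('n \<Rightarrow> real) pmf"
    and x :: "(('n \<Rightarrow> real) \<times> ('n \<Rightarrow> real)) pmf"
  assumes two_bidders: "CARD('n) = 2"
    and v_nonneg: "\<forall>i. 0 \<le> v i"
    and prior: "is_prior G"
    and info: "info_structure G x"
    and cal: "calibrated x"
    and ind: "independent_is x"
  shows "revenue v x \<le> Min (range (\<lambda>i. v i * measure_pmf.expectation G (\<lambda>r. r i)))
       \<and> revenue v (no_disclosure G) = Min (range (\<lambda>i. v i * measure_pmf.expectation G (\<lambda>r. r i)))
       \<and> revenue v x \<le> revenue v (no_disclosure G)"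
proof -
  have fin: "finite (set_pmf x)" using info unfolding info_structure_def by auto
  have cube: "\<And>r s. (r, s) \<in> set_pmf x \<Longrightarrow> in_unit_cube r \<and> in_unit_cube s"
    using info unfolding info_structure_def by auto
  have Gx: "map_pmf fst x = G" using info unfolding info_structure_def by auto
  have finG: "finite (set_pmf G)" using prior unfolding is_prior_def by auto
  have cubeG: "\<And>r. r \<in> set_pmf G \<Longrightarrow> in_unit_cube r" using prior unfolding is_prior_def by auto
  define m where "m = (\<lambda>i. measure_pmf.expectation G (\<lambda>r. r i))"
  have H: "\<forall>s0 \<in> snd ` set_pmf x. measure_pmf.expectation x (\<lambda>w. (case w of (r,s) \<Rightarrow> r i) * indicator {(r,s). s = s0} w)
         = s0 i * measure_pmf.prob x {(r,s). s = s0}" for i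
  proof
    fix s0 assume "s0 \<in> snd ` set_pmf x"
    then obtain r0 where rs: "(r0, s0) \<in> set_pmf x" by force
    have P1: "measure_pmf.prob x {(r,s). s = s0} > 0" by (rule measure_pmf_posI[OF rs]) simp
    have P2: "measure_pmf.prob x {(r,s). s i = s0 i} > 0" by (rule measure_pmf_posI[OF rs]) simp
    have c1: "cond_exp x (\<lambda>(r, s). r i) {(r, s). s i = s0 i} = s0 i"
      using cal P2 unfolding calibrated_def by blast
    have c2: "cond_exp x (\<lambda>(r, s). r i) {(r, s). s = s0} = cond_exp x (\<lambda>(r, s). r i) {(r, s). s i = s0 i}"
      using ind \<open>s0 \<in> snd ` set_pmf x\<close> unfolding independent_is_def by blast
    have "cond_exp x (\<lambda>(r, s). r i) {(r, s). s = s0} = s0 i" using c1 c2 by simp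
    then show "measure_pmf.expectation x (\<lambda>w. (case w of (r,s) \<Rightarrow> r i) * indicator {(r,s). s = s0} w)
         = s0 i * measure_pmf.prob x {(r,s). s = s0}"
      using P1 unfolding cond_exp_def by (simp add: field_simps)
  qed
  have coreI: "measure_pmf.expectation x (\<lambda>(r,s). r i * g s) = measure_pmf.expectation x (\<lambda>(r,s). s i * g s)"
    for i and g :: "('n \<Rightarrow> real) \<Rightarrow> real"
    using core[OF fin H[of i], of g] by simp
  have intx: "integrable (measure_pmf x) F" for F :: "_ \<Rightarrow> real"
    by (rule integrable_measure_pmf_finite[OF fin])
  have intG: "integrable (measure_pmf G) F" for F :: "_ \<Rightarrow> real"
    by (rule integrable_measure_pmf_finite[OF finG])
  have "revenue v x = measure_pmf.expectation x (\<lambda>p. \<Sum>i\<in>UNIV. (\<lambda>(r,s). r i * wt v s i) p)"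
    unfolding revenue_def outcome_lin by (intro Bochner_Integration.integral_cong refl) (auto split: prod.splits)
  also have "\<dots> = (\<Sum>i\<in>UNIV. measure_pmf.expectation x (\<lambda>(r,s). r i * wt v s i))"
    by (rule Bochner_Integration.integral_sum) (rule intx)
  also have "\<dots> = (\<Sum>i\<in>UNIV. measure_pmf.expectation x (\<lambda>(r,s). s i * wt v s i))"
    using coreI by simp
  also have "\<dots> = measure_pmf.expectation x (\<lambda>p. \<Sum>i\<in>UNIV. (\<lambda>(r,s). s i * wt v s i) p)"
    by (rule Bochner_Integration.integral_sum[symmetric]) (rule intx)
  also have "\<dots> = measure_pmf.expectation x (\<lambda>p. Min (range (\<lambda>i. v i * snd p i)))"
  proof (rule E_cong[OF fin])
    fix p assume p: "p \<in> set_pmf x"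
    obtain r s where ps: "p = (r, s)" by force
    have "\<forall>i. 0 \<le> s i" using cube[of r s] p ps unfolding in_unit_cube_def by auto
    then show "(\<Sum>i\<in>UNIV. (\<lambda>(r,s). s i * wt v s i) p) = Min (range (\<lambda>i. v i * snd p i))"
      using pointwise[OF two_bidders v_nonneg] ps by simp
  qed
  finally have revx: "revenue v x = measure_pmf.expectation x (\<lambda>p. Min (range (\<lambda>i. v i * snd p i)))" .
  have ES: "measure_pmf.expectation x (\<lambda>p. snd p j) = m j" for j
  proof -
    have "measure_pmf.expectation x (\<lambda>p. snd p j) = measure_pmf.expectation x (\<lambda>(r,s). s j * (\<lambda>_. 1) s)"
      by (intro Bochner_Integration.integral_cong refl) (auto split: prod.splits)
    also have "\<dots> = measure_pmf.expectation x (\<lambda>(r,s). r j * (\<lambda>_. 1) s)" using coreI[of j "\<lambda>_. 1"] by simp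
    also have "\<dots> = measure_pmf.expectation x (\<lambda>p. fst p j)"
      by (intro Bochner_Integration.integral_cong refl) (auto split: prod.splits)
    also have "\<dots> = measure_pmf.expectation (map_pmf fst x) (\<lambda>r. r j)" by simp
    also have "\<dots> = m j" unfolding Gx m_def by simp
    finally show ?thesis .
  qed
  have bound: "revenue v x \<le> v j * m j" for j
  proof -
    have "revenue v x \<le> measure_pmf.expectation x (\<lambda>p. v j * snd p j)"
      unfolding revx by (intro integral_mono intx) (auto intro!: Min_le)
    also have "\<dots> = v j * m j" using ES by simp
    finally show ?thesis .
  qed
  have A: "revenue v x \<le> Min (range (\<lambda>i. v i * m i))"
    using bound by (intro Min.boundedI) auto
  have mnn: "\<forall>i. 0 \<le> m i"
  proof
    fix i
    show "0 \<le> m i" unfolding m_def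
      by (intro integral_nonneg_AE AE_pmfI) (use cubeG in \<open>auto simp: in_unit_cube_def\<close>)
  qed
  have nd: "no_disclosure G = map_pmf (\<lambda>r. (r, m)) G" unfolding no_disclosure_def m_def by simp
  have "revenue v (no_disclosure G) = measure_pmf.expectation G (\<lambda>r. \<Sum>i\<in>UNIV. r i * wt v m i)"
    unfolding revenue_def nd by (simp add: outcome_lin)
  also have "\<dots> = (\<Sum>i\<in>UNIV. measure_pmf.expectation G (\<lambda>r. r i * wt v m i))"
    by (rule Bochner_Integration.integral_sum) (rule intG)
  also have "\<dots> = (\<Sum>i\<in>UNIV. m i * wt v m i)" unfolding m_def by simp
  also have "\<dots> = Min (range (\<lambda>i. v i * m i))" by (rule pointwise[OF two_bidders v_nonneg mnn])
  finally have B: "revenue v (no_disclosure G) = Min (range (\<lambda>i. v i * m i))" .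
  show ?thesis using A B unfolding m_def by simp
qed

end
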